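(* Assume the data (A1)–(A5): an associative unital $*$-algebra $\mathcal A$ over $\mathbb C$; an $\mathcal A$-bimodule $\Omega^1$; a $\mathbb C$-linear derivation $d:\mathcal A\to\Omega^1$; a map $\omega:\Omega^1\times\overline{\Omega^1}\to\mathbb C$, linear in both slots, with $\omega(\alpha,\overline\beta)=\overline{\omega(\beta,\overline\alpha)}$, $\omega(f\alpha g,\overline\beta)=\omega(\alpha,\overline{f^*\beta g^*})$, $\omega(\alpha,\overline\alpha)>0$ for $\alpha\ne0$; and a linear $\eta:\mathcal A\to\mathbb C$ with $\eta(f^* )=-\overline{\eta(f)}$ and $\eta([f,g])=\frac{-1}{2\sqrt{-1}}\big(\omega(df,\overline{d(g^* )})-\omega(dg,\overline{d(f^* )})\big)$. Let $\overline{\Omega^1}$, $d^\dagger$, $\mathbb B$ and $\Xi'$ be as in the context. Let $P=(p_{ij})\in\mathrm{Mat}(n\times n,\mathcal A)$ with $P^2=P$, $p_{ij}^*=p_{ji}$, and let $E=\mathcal A^nP$ (row vectors) with the Hermitian form induced from $\mathsf H(\phi,\overline\psi)=\sum_i\phi_i\psi_i^*$. Let $A=A_{can}+\delta$ with $A_{can}=(2P-1)dP$, $\delta\in\mathrm{Mat}(n\times n,\Omega^1)$, $\delta=P\delta P$; it defines the connection $\nabla\phi=d\phi+\phi A$ on $E$, whose Hermitian-conjugate connection is $\nabla^\dagger\phi=d^\dagger\phi+\phi A^\dagger$ with $(A^\dagger)_{ij}:=\overline{A_{ji}}$. Let $u\in\mathrm{Mat}(n\times n,\mathcal A)$ with $u=PuP$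 and $u_{ij}^*=-u_{ji}$, acting on $E$ by $\phi\mapsto\phi u$. Let $C_3:E\to\mathbb B\otimes_{\mathcal A}\mathbb B\otimes_{\mathcal A}\mathbb B\otimes_{\mathcal A}E$ be the composition of $u$ followed by three applications of $\widetilde{\nabla\!\!\!\nabla}:E\to\mathbb B\otimes_{\mathcal A}E$, $\phi\mapsto$ the element with components $(\phi,\nabla\phi,\nabla^\dagger\phi)$; concretely, with $N\in\mathrm{Mat}(n\times n,\mathbb B)$, $N_{jk}:=(\delta_{jk},A_{jk},(A^\dagger)_{jk})$, one has $\operatorname{Trace}_E(C_3)=\big[\sum_{i,j,k,l}u_{ij}N_{jk}\otimes N_{kl}\otimes N_{li}\big]\in\#(\mathbb B\otimes_{\mathcal A}\mathbb B\otimes_{\mathcal A}\mathbb B)$. Then $$\frac{\sqrt{-1}}{2}\,\Xi'\big(\operatorname{Trace}_E(C_3)\big)=\eta(\operatorname{Trace}u)-\omega^{symp}(A,du)+\tfrac12\,\omega^{symp}(A,[A,u]),$$ where $\omega^{symp}(B,C):=\operatorname{Im}\sum_{i,j}\omega(B_{ij},\overline{C_{ij}})$, $du=(du_{ij})$, $[A,u]=Au-uA$. That is, the moment map defined via $\Xi'$ agrees with the moment map of the Hamiltonian action of unitary gauge transformations on connections on $E$.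
   Context: $\overline{\Omega^1}$ is the complex-conjugate space of $\Omega^1$, an $\mathcal A$-bimodule via $f\cdot\overline\beta\cdot g:=\overline{g^*\beta f^*}$; $d^\dagger(f):=-\overline{d(f^* )}$, applied entrywise to vectors. $\mathbb B:=\mathcal A\oplus\Omega^1\oplus\overline{\Omega^1}$ with bimodule structure $f(h,\alpha,\overline\beta)g=(fhg, f\alpha g+df\,hg, f\overline\beta g+d^\dagger f\,hg)$; in $u_{ij}N_{jk}$ the left action of $\mathcal A$ on $\mathbb B$ is used. For a bimodule $G$, $\#(G)=G/\mathrm{span}\{ag-ga\}$; for $\Phi:E\to G\otimes_{\mathcal A}E$, $\operatorname{Trace}_E(\Phi)\in\#(G)$ is the image of $\Phi$ under $\mathrm{Hom}(E,G\otimes_{\mathcal A}E)\cong E^\vee\otimes_{\mathcal A}G\otimes_{\mathcal A}E\to\#(G)$ contracting $E$ with $E^\vee=\mathrm{Hom}_{\mathcal A}(E,\mathcal A)$. $\Xi':\#(\mathbb B\otimes_{\mathcal A}\mathbb B\otimes_{\mathcal A}\mathbb B)\to\mathbb C$ is induced by the trilinear $\Xi$ given on pure tensors (writing $f,\alpha,\overline\alpha$ for elements of the three summands; unlisted type combinations map to $0$) by: $\Xi(f_1\otimes f_2\otimes f_3)=\sum_{\text{cyclic }(a,b,c)}\frac13(-2\sqrt{-1}\eta(f_af_bf_c)-\omega(df_a,d^\dagger f_b\cdot f_c)+\omega(df_b\cdot f_c,d^\dagger f_a))$; $\Xi(\alpha\otimes f\otimes g)=\Xi(g\otimes\alpha\otimes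 f)=\Xi(f\otimes g\otimes\alpha)=\omega(\alpha,d^\dagger f\cdot g)$; $\Xi(\overline\alpha\otimes f\otimes g)=\Xi(g\otimes\overline\alpha\otimes f)=\Xi(f\otimes g\otimes\overline\alpha)=-\omega(df\cdot g,\overline\alpha)$; $\Xi(\alpha\otimes\overline\beta\otimes f)=\Xi(f\otimes\alpha\otimes\overline\beta)=\Xi(\overline\beta\otimes f\otimes\alpha)=-\omega(\alpha,\overline\beta\cdot f)$; $\Xi(\overline\beta\otimes\alpha\otimes f)=\Xi(f\otimes\overline\beta\otimes\alpha)=\Xi(\alpha\otimes f\otimes\overline\beta)=\omega(\alpha\cdot f,\overline\beta)$ (this $\Xi$ is known to descend to $\#$). *)

theory Defs
  imports Complex_Main
begin

text \<open>The algebra is a type 'a of class ring_1 (associative, unital)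
with an explicit complex scalar multiplication sA and involution st.  The bimodule
Omega^1 is a type 'b with complex scalar multiplication sO, left action lm, right action rm.
The conjugate space of Omega^1 is represented by Omega^1 itself: the representative beta
stands for conj(beta).  The pairing w alpha beta stands for omega(alpha, conj(beta)).\<close>

definition star_algebra :: "(complex \<Rightarrow> 'a::ring_1 \<Rightarrow> 'a) \<Rightarrow> ('a \<Rightarrow> 'a) \<Rightarrow> bool" where
  "star_algebra sA st \<longleftrightarrow>
     (\<forall>c x y. sA c (x + y) = sA c x + sA c y) \<and>
     (\<forall>c e x. sA (c + e) x = sA c x + sA e x) \<and>
     (\<forall>c e x. sA (c * e) x = sA c (sA e x)) \<and>
     (\<forall>x. sA 1 x = x) \<and>
     (\<forall>c x y. sA c (x * y) = sA c x * y \<and> sA c (x * y) = x * sA c y) \<and>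
     (\<forall>x y. st (x + y) = st x + st y) \<and>
     (\<forall>c x. st (sA c x) = sA (cnj c) (st x)) \<and>
     (\<forall>x y. st (x * y) = st y * st x) \<and>
     (\<forall>x. st (st x) = x)"

definition bimodule ::
  "(complex \<Rightarrow> 'a::ring_1 \<Rightarrow> 'a) \<Rightarrow> (complex \<Rightarrow> 'b::ab_group_add \<Rightarrow> 'b)
   \<Rightarrow> ('a \<Rightarrow> 'b \<Rightarrow> 'b) \<Rightarrow> ('b \<Rightarrow> 'a \<Rightarrow> 'b) \<Rightarrow> bool" where
  "bimodule sA sO lm rm \<longleftrightarrow>
     (\<forall>c a b. sO c (a + b) = sO c a + sO c b) \<and>
     (\<forall>c e a. sO (c + e) a = sO c a + sO e a) \<and>
     (\<forall>c e a. sO (c * e) a = sO c (sO e a)) \<and>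
     (\<forall>a. sO 1 a = a) \<and>
     (\<forall>f g a. lm (f + g) a = lm f a + lm g a) \<and>
     (\<forall>f a b. lm f (a + b) = lm f a + lm f b) \<and>
     (\<forall>f g a. lm (f * g) a = lm f (lm g a)) \<and>
     (\<forall>a. lm 1 a = a) \<and>
     (\<forall>f g a. rm a (f + g) = rm a f + rm a g) \<and>
     (\<forall>f a b. rm (a + b) f = rm a f + rm b f) \<and>
     (\<forall>f g a. rm a (f * g) = rm (rm a f) g) \<and>
     (\<forall>a. rm a 1 = a) \<and>
     (\<forall>f g a. rm (lm f a) g = lm f (rm a g)) \<and>
     (\<forall>c f a. lm (sA c f) a = sO c (lm f a) \<and> lm f (sO c a) = sO c (lm f a)) \<and>
     (\<forall>c f a. rm a (sA c f) = sO c (rm a f) \<and> rm (sO c a) f = sO c (rm a f))"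

definition linear_derivation ::
  "(complex \<Rightarrow> 'a::ring_1 \<Rightarrow> 'a) \<Rightarrow> (complex \<Rightarrow> 'b::ab_group_add \<Rightarrow> 'b)
   \<Rightarrow> ('a \<Rightarrow> 'b \<Rightarrow> 'b) \<Rightarrow> ('b \<Rightarrow> 'a \<Rightarrow> 'b) \<Rightarrow> ('a \<Rightarrow> 'b) \<Rightarrow> bool" where
  "linear_derivation sA sO lm rm d \<longleftrightarrow>
     (\<forall>f g. d (f + g) = d f + d g) \<and>
     (\<forall>c f. d (sA c f) = sO c (d f)) \<and>
     (\<forall>f g. d (f * g) = rm (d f) g + lm f (d g))"

text \<open>w alpha beta = omega(alpha, conj beta): linear in alpha, linear in conj beta
(i.e. antilinear in the representative beta), Hermitian, bimodule-compatible, positive.\<close>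
definition omega_cond ::
  "('a::ring_1 \<Rightarrow> 'a) \<Rightarrow> (complex \<Rightarrow> 'b::ab_group_add \<Rightarrow> 'b)
   \<Rightarrow> ('a \<Rightarrow> 'b \<Rightarrow> 'b) \<Rightarrow> ('b \<Rightarrow> 'a \<Rightarrow> 'b) \<Rightarrow> ('b \<Rightarrow> 'b \<Rightarrow> complex) \<Rightarrow> bool" where
  "omega_cond st sO lm rm w \<longleftrightarrow>
     (\<forall>a a' b. w (a + a') b = w a b + w a' b) \<and>
     (\<forall>c a b. w (sO c a) b = c * w a b) \<and>
     (\<forall>a b b'. w a (b + b') = w a b + w a b') \<and>
     (\<forall>c a b. w a (sO c b) = cnj c * w a b) \<and>
     (\<forall>a b. w a b = cnj (w b a)) \<and>
     (\<forall>f g a b. w (lm f (rm a g)) b = w a (lm (st f) (rm b (st g)))) \<and>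
     (\<forall>a. a \<noteq> 0 \<longrightarrow> Im (w a a) = 0 \<and> Re (w a a) > 0)"

definition eta_cond ::
  "(complex \<Rightarrow> 'a::ring_1 \<Rightarrow> 'a) \<Rightarrow> ('a \<Rightarrow> 'a) \<Rightarrow> ('a \<Rightarrow> 'b)
   \<Rightarrow> ('b \<Rightarrow> 'b \<Rightarrow> complex) \<Rightarrow> ('a \<Rightarrow> complex) \<Rightarrow> bool" where
  "eta_cond sA st d w \<eta> \<longleftrightarrow>
     (\<forall>f g. \<eta> (f + g) = \<eta> f + \<eta> g) \<and>
     (\<forall>c f. \<eta> (sA c f) = c * \<eta> f) \<and>
     (\<forall>f. \<eta> (st f) = - cnj (\<eta> f)) \<and>
     (\<forall>f g. \<eta> (f * g - g * f) =
        (-1 / (2 * \<i>)) * (w (d f) (d (st g)) - w (d g) (d (st f))))"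

text \<open>Operations on the conjugate space, in terms of representatives:
 f . conj(beta) = conj(beta f^*),  conj(beta) . g = conj(g^* beta),
 d^dagger f = conj(-d(f^*)).\<close>
definition lmc where "lmc st rm f b = rm b (st f)"
definition rmc where "rmc st lm b g = lm (st g) b"
definition ddag where "ddag st d f = - d (st f)"

text \<open>Elements of B = A + Omega^1 + conj(Omega^1) as triples (h, alpha, beta) meaning
(h, alpha, conj beta).  Left action:
 f(h,alpha,conj beta) = (f h, f alpha + df h, f conj(beta) + d^dagger f h).\<close>
definition lmB :: "('a::ring_1 \<Rightarrow> 'a) \<Rightarrow> ('a \<Rightarrow> 'b \<Rightarrow> 'b) \<Rightarrow> ('b::ab_group_add \<Rightarrow> 'a \<Rightarrow> 'b)
   \<Rightarrow> ('a \<Rightarrow> 'b) \<Rightarrow> 'a \<Rightarrow> 'a \<times> 'b \<times> 'b \<Rightarrow> 'a \<times> 'b \<times> 'b" where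
  "lmB st lm rm d f x = (case x of (h, a, b) \<Rightarrow>
     (f * h, lm f a + rm (d f) h, lmc st rm f b + rmc st lm (ddag st d f) h))"

text \<open>The trilinear form Xi, extended trilinearly from the pure-tensor formulas of
the context (unlisted type combinations give 0).\<close>
definition Xi ::
  "('a::ring_1 \<Rightarrow> 'a) \<Rightarrow> ('a \<Rightarrow> 'b \<Rightarrow> 'b) \<Rightarrow> ('b::ab_group_add \<Rightarrow> 'a \<Rightarrow> 'b)
   \<Rightarrow> ('a \<Rightarrow> 'b) \<Rightarrow> ('b \<Rightarrow> 'b \<Rightarrow> complex) \<Rightarrow> ('a \<Rightarrow> complex)
   \<Rightarrow> 'a \<times> 'b \<times> 'b \<Rightarrow> 'a \<times> 'b \<times> 'b \<Rightarrow> 'a \<times> 'b \<times> 'b \<Rightarrow> complex" where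
  "Xi st lm rm d w \<eta> x y z =
    (let x1 = fst x; x2 = fst (snd x); x3 = snd (snd x);
         y1 = fst y; y2 = fst (snd y); y3 = snd (snd y);
         z1 = fst z; z2 = fst (snd z); z3 = snd (snd z);
         XFFF = (\<lambda>fa fb fc. (1/3) * (- 2 * \<i> * \<eta> (fa * fb * fc)
                   - w (d fa) (rmc st lm (ddag st d fb) fc)
                   + w (rm (d fb) fc) (ddag st d fa)));
         XOFF = (\<lambda>a f g. w a (rmc st lm (ddag st d f) g));
         XCFF = (\<lambda>a f g. - w (rm (d f) g) a);
         XOCF = (\<lambda>a b f. - w a (rmc st lm b f));
         XCOF = (\<lambda>a b f. w (rm a f) b)
     in XFFF x1 y1 z1 + XFFF y1 z1 x1 + XFFF z1 x1 y1
      + XOFF x2 y1 z1 + XOFF y2 z1 x1 + XOFF z2 x1 y1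
      + XCFF x3 y1 z1 + XCFF y3 z1 x1 + XCFF z3 x1 y1
      + XOCF x2 y3 z1 + XOCF y2 z3 x1 + XOCF z2 x3 y1
      + XCOF y2 x3 z1 + XCOF z2 y3 x1 + XCOF x2 z3 y1)"

definition omega_symp :: "nat \<Rightarrow> ('b \<Rightarrow> 'b \<Rightarrow> complex) \<Rightarrow> (nat \<Rightarrow> nat \<Rightarrow> 'b) \<Rightarrow> (nat \<Rightarrow> nat \<Rightarrow> 'b) \<Rightarrow> real" where
  "omega_symp n w B C = Im (\<Sum>i<n. \<Sum>j<n. w (B i j) (C i j))"

end

theory Submission
  imports Defs
begin

context
  fixes sA :: "complex \<Rightarrow> 'a::ring_1 \<Rightarrow> 'a" and st :: "'a \<Rightarrow> 'a"
    and sO :: "complex \<Rightarrow> 'b::ab_group_add \<Rightarrow> 'b"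
    and lm :: "'a \<Rightarrow> 'b \<Rightarrow> 'b" and rm :: "'b \<Rightarrow> 'a \<Rightarrow> 'b"
    and d :: "'a \<Rightarrow> 'b" and w :: "'b \<Rightarrow> 'b \<Rightarrow> complex" and \<eta> :: "'a \<Rightarrow> complex"
  assumes A1: "star_algebra sA st"
    and A2: "bimodule sA sO lm rm"
    and A3: "linear_derivation sA sO lm rm d"
    and A4: "omega_cond st sO lm rm w"
    and A5: "eta_cond sA st d w \<eta>"
begin

lemma st_add: "st (x + y) = st x + st y" using A1 by (simp add: star_algebra_def)
lemma st_mult: "st (x * y) = st y * st x" using A1 by (simp add: star_algebra_def)
lemma st_st: "st (st x) = x" using A1 by (simp add: star_algebra_def)
lemma st_0[simp]: "st 0 = 0" using st_add[of 0 0] by simp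
lemma st_1[simp]: "st 1 = 1"
  using st_mult[of 1 "st 1"] by (simp add: st_st)
lemma st_neg: "st (- x) = - st x"
  using st_add[of x "-x"] by (metis add.right_inverse st_0 minus_unique)

lemma lm_add1: "lm (f + g) a = lm f a + lm g a" using A2 by (simp add: bimodule_def)
lemma lm_add2: "lm f (a + b) = lm f a + lm f b" using A2 by (simp add: bimodule_def)
lemma rm_add1: "rm (a + b) f = rm a f + rm b f" using A2 by (simp add: bimodule_def)
lemma rm_add2: "rm a (f + g) = rm a f + rm a g" using A2 by (simp add: bimodule_def)
lemma lm_1[simp]: "lm 1 a = a" using A2 by (simp add: bimodule_def)
lemma rm_1[simp]: "rm a 1 = a" using A2 by (simp add: bimodule_def)
lemma lm_0a[simp]: "lm 0 a = 0" using lm_add1[of 0 0 a] by simp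
lemma lm_0b[simp]: "lm f 0 = 0" using lm_add2[of f 0 0] by simp
lemma rm_0a[simp]: "rm 0 f = 0" using rm_add1[of 0 0 f] by simp
lemma rm_0b[simp]: "rm a 0 = 0" using rm_add2[of a 0 0] by simp
lemma lm_neg1: "lm (- f) a = - lm f a"
  using lm_add1[of f "-f" a] by (metis add.right_inverse lm_0a minus_unique)
lemma rm_neg2: "rm a (- f) = - rm a f"
  using rm_add2[of a f "-f"] by (metis add.right_inverse rm_0b minus_unique)

lemma d_add: "d (f + g) = d f + d g" using A3 by (simp add: linear_derivation_def)
lemma d_mult: "d (f * g) = rm (d f) g + lm f (d g)" using A3 by (simp add: linear_derivation_def)
lemma d_0[simp]: "d 0 = 0" using d_add[of 0 0] by simp
lemma d_1[simp]: "d 1 = 0" using d_mult[of 1 1] by simp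
lemma d_neg: "d (- f) = - d f"
  using d_add[of f "-f"] by (metis add.right_inverse d_0 minus_unique)

lemma w_add1: "w (a + a') b = w a b + w a' b" using A4 unfolding omega_cond_def by blast
lemma w_add2: "w a (b + b') = w a b + w a b'" using A4 unfolding omega_cond_def by blast
lemma w_herm: "w a b = cnj (w b a)" using A4 unfolding omega_cond_def by blast
lemma w_compat: "w (lm f (rm a g)) b = w a (lm (st f) (rm b (st g)))"
  using A4 unfolding omega_cond_def by blast
lemma w_0a[simp]: "w 0 b = 0" using w_add1[of 0 0 b] by simp
lemma w_0b[simp]: "w a 0 = 0" using w_add2[of a 0 0] by simp
lemma w_neg1: "w (- a) b = - w a b"
  using w_add1[of a "-a" b] by (metis add.right_inverse w_0a minus_unique)
lemma w_neg2: "w a (- b) = - w a b"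
  using w_add2[of a b "-b"] by (metis add.right_inverse w_0b minus_unique)
lemma w_diff2: "w a (b - b') = w a b - w a b'"
  using w_add2[of a b "-b'"] w_neg2 by simp
lemma w_sum2: "w a (\<Sum>k\<in>S. f k) = (\<Sum>k\<in>S. w a (f k))"
  by (induction S rule: infinite_finite_induct) (auto simp: w_add2)
lemma w_rm: "w (rm a g) b = w a (rm b (st g))"
  using w_compat[of 1 a g b] by simp
lemma w_lm: "w (lm f a) b = w a (lm (st f) b)"
  using w_compat[of f a 1 b] by simp

lemma eta_add: "\<eta> (f + g) = \<eta> f + \<eta> g" using A5 unfolding eta_cond_def by blast
lemma eta_0[simp]: "\<eta> 0 = 0" using eta_add[of 0 0] by simp
lemma eta_sum: "\<eta> (\<Sum>k\<in>S. f k) = (\<Sum>k\<in>S. \<eta> (f k))"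
  by (induction S rule: infinite_finite_induct) (auto simp: eta_add)

lemma term_eq:
  assumes skew: "st (u i j) = - u j i"
  shows "Xi st lm rm d w \<eta> (lmB st lm rm d (u i j) (if j = k then 1 else 0, A j k, A k j))
           (if k = l then 1 else 0, A k l, A l k) (if l = i then 1 else 0, A l i, A i l) =
    (if l = i then (if j = k \<and> k = i then -2*\<i>*\<eta> (u i i) else 0) else 0)
  + (if l = k then (if j = k then w (A j i) (d (u j i)) - w (d (u i j)) (A i j) else 0) else 0)
  + (if l = i then - w (lm (u i j) (A j k) + rm (d (u i j)) (if j = k then 1 else 0)) (A i k) else 0)
  + (if l = k then w (lm (u i j) (A j k) + rm (d (u i j)) (if j = k then 1 else 0)) (A i k) else 0)
  + (if l = k then - w (A k i) (lmc st rm (u i j) (A k j) + rmc st lm (ddag st d (u i j)) (if j = k then 1 else 0)) else 0)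
  + (if l = i then w (A k i) (lmc st rm (u i j) (A k j) + rmc st lm (ddag st d (u i j)) (if j = k then 1 else 0)) else 0)
  + (if j = k then w (A j l) (lm (u j i) (A i l)) + w (rm (A l i) (u i j)) (A l j) else 0)"
proof (cases "j = k")
  case True
  then show ?thesis using skew
    by (cases "k = l"; cases "l = i")
      (simp_all add: Xi_def Let_def lmB_def lmc_def rmc_def ddag_def skew st_neg d_neg lm_neg1 w_neg2 algebra_simps)
next
  case False
  then show ?thesis using skew
    by (cases "k = l"; cases "l = i")
      (simp_all add: Xi_def Let_def lmB_def lmc_def rmc_def ddag_def skew st_neg d_neg lm_neg1 w_neg2 algebra_simps)
qed

lemma sum_l:
  assumes "i < (n::nat)" "k < n"
  shows "(\<Sum>l<n.
    (if l = i then (if j = k \<and> k = i then -2*\<i>*\<eta> (u i i) else 0) else 0)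
  + (if l = k then (if j = k then w (A j i) (d (u j i)) - w (d (u i j)) (A i j) else 0) else 0)
  + (if l = i then - w (lm (u i j) (A j k) + rm (d (u i j)) (if j = k then 1 else 0)) (A i k) else 0)
  + (if l = k then w (lm (u i j) (A j k) + rm (d (u i j)) (if j = k then 1 else 0)) (A i k) else 0)
  + (if l = k then - w (A k i) (lmc st rm (u i j) (A k j) + rmc st lm (ddag st d (u i j)) (if j = k then 1 else 0)) else 0)
  + (if l = i then w (A k i) (lmc st rm (u i j) (A k j) + rmc st lm (ddag st d (u i j)) (if j = k then 1 else 0)) else 0)
  + (if j = k then w (A j l) (lm (u j i) (A i l)) + w (rm (A l i) (u i j)) (A l j) else 0))
  = (if j = k \<and> k = i then -2*\<i>*\<eta> (u i i) else 0)
  + (if j = k then w (A j i) (d (u j i)) - w (d (u i j)) (A i j) else 0)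
  + (if j = k then (\<Sum>l<n. w (A j l) (lm (u j i) (A i l)) + w (rm (A l i) (u i j)) (A l j)) else 0)"
  using assms by (simp add: sum.distrib)

lemma core:
  fixes A :: "nat \<Rightarrow> nat \<Rightarrow> 'b" and u :: "nat \<Rightarrow> nat \<Rightarrow> 'a" and n :: nat
  assumes skew: "\<forall>i<n. \<forall>j<n. st (u i j) = - u j i"
  shows "(\<i> / 2) * (\<Sum>i<n. \<Sum>j<n. \<Sum>k<n. \<Sum>l<n.
            Xi st lm rm d w \<eta> (lmB st lm rm d (u i j) (if j = k then 1 else 0, A j k, A k j))
              (if k = l then 1 else 0, A k l, A l k) (if l = i then 1 else 0, A l i, A i l))
        = \<eta> (\<Sum>i<n. u i i)
          - complex_of_real (omega_symp n w A (\<lambda>i j. d (u i j)))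
          + complex_of_real (omega_symp n w A (\<lambda>i j. \<Sum>k<n. rm (A i k) (u k j) - lm (u i k) (A k j)) / 2)"
proof -
  define c where "c i = -2*\<i>*\<eta> (u i i)" for i
  define B where "B i j = w (A j i) (d (u j i)) - w (d (u i j)) (A i j)" for i j
  define C where "C i j = (\<Sum>l<n. w (A j l) (lm (u j i) (A i l)) + w (rm (A l i) (u i j)) (A l j))" for i j
  have step1: "(\<Sum>i<n. \<Sum>j<n. \<Sum>k<n. \<Sum>l<n.
            Xi st lm rm d w \<eta> (lmB st lm rm d (u i j) (if j = k then 1 else 0, A j k, A k j))
              (if k = l then 1 else 0, A k l, A l k) (if l = i then 1 else 0, A l i, A i l))
     = (\<Sum>i<n. \<Sum>j<n. \<Sum>k<n. (if j = k then (if k = i then c i else 0) else 0)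
          + (if j = k then B i j else 0) + (if j = k then C i j else 0))"
  proof (intro sum.cong refl)
    fix i j k assume "i \<in> {..<n}" "j \<in> {..<n}" "k \<in> {..<n}"
    then have ij: "i < n" "j < n" "k < n" by auto
    have sk: "st (u i j) = - u j i" using skew ij by blast
    show "(\<Sum>l<n. Xi st lm rm d w \<eta> (lmB st lm rm d (u i j) (if j = k then 1 else 0, A j k, A k j))
              (if k = l then 1 else 0, A k l, A l k) (if l = i then 1 else 0, A l i, A i l))
       = (if j = k then (if k = i then c i else 0) else 0)
          + (if j = k then B i j else 0) + (if j = k then C i j else 0)"
      unfolding term_eq[where u=u and i=i and j=j and A=A and k=k, OF sk] sum_l[OF ij(1) ij(3)] c_def B_def C_def by auto
  qed
  have step2: "\<dots> = (\<Sum>i<n. c i) + (\<Sum>i<n. \<Sum>j<n. B i j) + (\<Sum>i<n. \<Sum>j<n. C i j)"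
    by (simp add: sum.distrib)

  define S where "S = (\<Sum>i<n. \<Sum>j<n. w (A i j) (d (u i j)))"
  define Z1 where "Z1 = (\<Sum>i<n. \<Sum>j<n. \<Sum>k<n. w (A i j) (rm (A i k) (u k j)))"
  define Z2 where "Z2 = (\<Sum>i<n. \<Sum>j<n. \<Sum>k<n. w (A i j) (lm (u i k) (A k j)))"
  have csum: "(\<Sum>i<n. c i) = -2*\<i>*\<eta> (\<Sum>i<n. u i i)"
    by (simp add: c_def eta_sum sum_distrib_left)
  have b1: "(\<Sum>i<n. \<Sum>j<n. w (A j i) (d (u j i))) = S"
    unfolding S_def by (rule sum.swap)
  have b2: "(\<Sum>i<n. \<Sum>j<n. w (d (u i j)) (A i j)) = cnj S"
    unfolding S_def cnj_sum by (intro sum.cong refl) (rule w_herm)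
  have bsum: "(\<Sum>i<n. \<Sum>j<n. B i j) = S - cnj S"
    unfolding B_def sum_subtractf b1 b2 ..
  have c1: "(\<Sum>i<n. \<Sum>j<n. \<Sum>l<n. w (A j l) (lm (u j i) (A i l))) = Z2"
  proof -
    have "(\<Sum>i<n. \<Sum>j<n. \<Sum>l<n. w (A j l) (lm (u j i) (A i l)))
        = (\<Sum>j<n. \<Sum>i<n. \<Sum>l<n. w (A j l) (lm (u j i) (A i l)))" by (rule sum.swap)
    also have "\<dots> = (\<Sum>j<n. \<Sum>l<n. \<Sum>i<n. w (A j l) (lm (u j i) (A i l)))"
      by (rule sum.cong[OF refl], rule sum.swap)
    finally show ?thesis unfolding Z2_def .
  qed
  have c2: "(\<Sum>i<n. \<Sum>j<n. \<Sum>l<n. w (rm (A l i) (u i j)) (A l j)) = cnj Z1"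
  proof -
    have "(\<Sum>i<n. \<Sum>j<n. \<Sum>l<n. w (rm (A l i) (u i j)) (A l j))
        = (\<Sum>i<n. \<Sum>l<n. \<Sum>j<n. w (rm (A l i) (u i j)) (A l j))"
      by (rule sum.cong[OF refl], rule sum.swap)
    also have "\<dots> = (\<Sum>l<n. \<Sum>i<n. \<Sum>j<n. w (rm (A l i) (u i j)) (A l j))" by (rule sum.swap)
    also have "\<dots> = (\<Sum>l<n. \<Sum>j<n. \<Sum>i<n. w (rm (A l i) (u i j)) (A l j))"
      by (rule sum.cong[OF refl], rule sum.swap)
    also have "\<dots> = cnj Z1" unfolding Z1_def cnj_sum by (intro sum.cong refl) (rule w_herm)
    finally show ?thesis .
  qed
  have cs: "(\<Sum>i<n. \<Sum>j<n. C i j) = Z2 + cnj Z1"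
    unfolding C_def sum.distrib c1 c2 ..
  have z1: "cnj Z1 = - Z1"
  proof -
    have "cnj Z1 = (\<Sum>i<n. \<Sum>j<n. \<Sum>k<n. - w (A i k) (rm (A i j) (u j k)))"
      unfolding Z1_def cnj_sum
    proof (intro sum.cong refl)
      fix i j k assume "i \<in> {..<n}" "j \<in> {..<n}" "k \<in> {..<n}"
      then have "st (u k j) = - u j k" using skew by auto
      then show "cnj (w (A i j) (rm (A i k) (u k j))) = - w (A i k) (rm (A i j) (u j k))"
        by (metis w_herm w_rm rm_neg2 w_neg2)
    qed
    also have "\<dots> = (\<Sum>i<n. \<Sum>k<n. \<Sum>j<n. - w (A i k) (rm (A i j) (u j k)))"
      by (rule sum.cong[OF refl], rule sum.swap)
    also have "\<dots> = - Z1" unfolding Z1_def by (simp add: sum_negf)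
    finally show ?thesis .
  qed
  have z2: "cnj Z2 = - Z2"
  proof -
    have "cnj Z2 = (\<Sum>i<n. \<Sum>j<n. \<Sum>k<n. - w (A k j) (lm (u k i) (A i j)))"
      unfolding Z2_def cnj_sum
    proof (intro sum.cong refl)
      fix i j k assume "i \<in> {..<n}" "j \<in> {..<n}" "k \<in> {..<n}"
      then have "st (u i k) = - u k i" using skew by auto
      then show "cnj (w (A i j) (lm (u i k) (A k j))) = - w (A k j) (lm (u k i) (A i j))"
        by (metis w_herm w_lm lm_neg1 w_neg2)
    qed
    also have "\<dots> = (\<Sum>i<n. \<Sum>k<n. \<Sum>j<n. - w (A k j) (lm (u k i) (A i j)))"
      by (rule sum.cong[OF refl], rule sum.swap)
    also have "\<dots> = (\<Sum>k<n. \<Sum>i<n. \<Sum>j<n. - w (A k j) (lm (u k i) (A i j)))"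
      by (rule sum.swap)
    also have "\<dots> = (\<Sum>k<n. \<Sum>j<n. \<Sum>i<n. - w (A k j) (lm (u k i) (A i j)))"
      by (rule sum.cong[OF refl], rule sum.swap)
    also have "\<dots> = - Z2" unfolding Z2_def by (simp add: sum_negf)
    finally show ?thesis .
  qed
  have r1: "omega_symp n w A (\<lambda>i j. d (u i j)) = Im S"
    unfolding omega_symp_def S_def ..
  have r2: "omega_symp n w A (\<lambda>i j. \<Sum>k<n. rm (A i k) (u k j) - lm (u i k) (A k j)) = Im (Z1 - Z2)"
    unfolding omega_symp_def Z1_def Z2_def w_sum2 w_diff2 sum_subtractf ..
  have ReZ1: "Re Z1 = 0" using arg_cong[OF z1, of Re] by simp
  have ReZ2: "Re Z2 = 0" using arg_cong[OF z2, of Re] by simp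
  have L: "(\<Sum>i<n. \<Sum>j<n. \<Sum>k<n. \<Sum>l<n.
            Xi st lm rm d w \<eta> (lmB st lm rm d (u i j) (if j = k then 1 else 0, A j k, A k j))
              (if k = l then 1 else 0, A k l, A l k) (if l = i then 1 else 0, A l i, A i l))
     = -2*\<i>*\<eta> (\<Sum>i<n. u i i) + (S - cnj S) + (Z2 + cnj Z1)"
    using step1 step2 csum bsum cs by simp
  show ?thesis unfolding L r1 r2 z1
    using ReZ1 ReZ2 by (simp add: complex_eq_iff algebra_simps) (simp add: field_simps)
qed


end

theorem mainTheorem4:
  fixes sA :: "complex \<Rightarrow> 'a::ring_1 \<Rightarrow> 'a" and st :: "'a \<Rightarrow> 'a"
    and sO :: "complex \<Rightarrow> 'b::ab_group_add \<Rightarrow> 'b"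
    and lm :: "'a \<Rightarrow> 'b \<Rightarrow> 'b" and rm :: "'b \<Rightarrow> 'a \<Rightarrow> 'b"
    and d :: "'a \<Rightarrow> 'b" and w :: "'b \<Rightarrow> 'b \<Rightarrow> complex" and \<eta> :: "'a \<Rightarrow> complex"
    and n :: nat and P u :: "nat \<Rightarrow> nat \<Rightarrow> 'a" and \<delta> :: "nat \<Rightarrow> nat \<Rightarrow> 'b"
  assumes A1: "star_algebra sA st"
    and A2: "bimodule sA sO lm rm"
    and A3: "linear_derivation sA sO lm rm d"
    and A4: "omega_cond st sO lm rm w"
    and A5: "eta_cond sA st d w \<eta>"
    and P_idem: "\<forall>i<n. \<forall>j<n. (\<Sum>k<n. P i k * P k j) = P i j"
    and P_herm: "\<forall>i<n. \<forall>j<n. st (P i j) = P j i"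
    and delta_P: "\<forall>i<n. \<forall>j<n. \<delta> i j = (\<Sum>k<n. \<Sum>l<n. lm (P i k) (rm (\<delta> k l) (P l j)))"
    and u_P: "\<forall>i<n. \<forall>j<n. u i j = (\<Sum>k<n. \<Sum>l<n. P i k * u k l * P l j)"
    and u_skew: "\<forall>i<n. \<forall>j<n. st (u i j) = - u j i"
  shows
    "let A = (\<lambda>i j. (\<Sum>k<n. lm (2 * P i k - (if i = k then 1 else 0)) (d (P k j))) + \<delta> i j);
         N = (\<lambda>j k. (if j = k then (1::'a) else 0, A j k, A k j));
         comm = (\<lambda>i j. \<Sum>k<n. rm (A i k) (u k j) - lm (u i k) (A k j))
     in (\<i> / 2) * (\<Sum>i<n. \<Sum>j<n. \<Sum>k<n. \<Sum>l<n.
            Xi st lm rm d w \<eta> (lmB st lm rm d (u i j) (N j k)) (N k l) (N l i))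
        = \<eta> (\<Sum>i<n. u i i)
          - complex_of_real (omega_symp n w A (\<lambda>i j. d (u i j)))
          + complex_of_real (omega_symp n w A comm / 2)"
  unfolding Let_def by (rule core[OF A1 A2 A3 A4 A5 u_skew])

end
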